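(* Let $n_1,n_2,n_3$ be distinct primes and let $k>1$ be an integer with $\gcd(k,n_i)=1$ for $i=1,2,3$, and suppose $n=n_1n_2n_3$ is a pseudoprime of basis $k$. Then for all $m,j\in\mathbb{N}$, $$\frac{k^{\,j\,|n_2n_3-n_1^{m}|}-1}{n_1}\in\mathbb{N},\qquad \frac{k^{\,j\,|n_1n_2-n_3^{m}|}-1}{n_3}\in\mathbb{N},\qquad \frac{k^{\,j\,|n_1n_3-n_2^{m}|}-1}{n_2}\in\mathbb{N}.$$
   Context: A positive integer $n$ is called a pseudoprime of basis $k$ (where $k>1$ is an integer) if $n$ is an odd composite number, $\gcd(n,k)=1$, and $k^{n-1}\equiv 1 \pmod n$. $\mathbb{N}$ denotes the positive integers. *)

theory Defs
  imports "HOL-Number_Theory.Number_Theory"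
begin

definition pseudoprime :: "nat \<Rightarrow> nat \<Rightarrow> bool" where
  "pseudoprime n k \<longleftrightarrow> k > 1 \<and> odd n \<and> n > 1 \<and> \<not> prime n \<and> coprime n k \<and> [k ^ (n - 1) = 1] (mod n)"

text \<open>x is a positive integer (the paper's \<nat>).\<close>
definition pos_nat :: "real \<Rightarrow> bool" where
  "pos_nat x \<longleftrightarrow> x \<in> \<nat> \<and> x > 0"

end

theory Submission
  imports Defs
begin

lemma key:
  fixes p a k m j :: nat
  assumes p: "prime p" and cop: "coprime k p" and c: "[k ^ (p * a - 1) = 1] (mod p)"
    and nd: "\<not> p dvd a" and m: "m \<ge> 1" and j: "j \<ge> 1" and k: "k > 1"
  shows "pos_nat ((real k ^ (j * nat \<bar>int a - int (p ^ m)\<bar>) - 1) / real p)"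
proof -
  define e where "e = nat \<bar>int a - int (p ^ m)\<bar>"
  define d where "d = ord p k"
  have a0: "a \<ge> 1" using nd by (cases a) auto
  have "p dvd p ^ m" using m by (simp add: dvd_power)
  hence ne: "a \<noteq> p ^ m" using nd by auto
  hence epos: "e > 0" unfolding e_def by auto
  have npk: "\<not> p dvd k"
    using cop p coprime_common_divisor[of k p p] by (auto simp: not_prime_unit)
  have "[k ^ (p - 1) = 1] (mod p)" using fermat_theorem[OF p npk] .
  hence d1: "d dvd p - 1" unfolding d_def using ord_divides by blast
  have d2: "d dvd p * a - 1" unfolding d_def using ord_divides c by blast
  have p1: "p \<ge> 1" using p prime_ge_1_nat by blast
  have pa1: "p * a \<ge> 1" using p1 a0 by simp
  have i1: "[int p = 1] (mod int d)" using d1 p1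
    by (metis cong_iff_dvd_diff cong_sym of_nat_1 of_nat_diff int_dvd_int_iff cong_int_iff)
  have i2: "[int p * int a = 1] (mod int d)" using d2 pa1
    by (metis cong_iff_dvd_diff cong_sym of_nat_1 of_nat_diff int_dvd_int_iff cong_int_iff of_nat_mult)
  have i3: "[int p * int a = 1 * int a] (mod int d)" using i1 cong_mult cong_refl by blast
  have i4: "[int p ^ m = 1 ^ m] (mod int d)" using i1 cong_pow by blast
  have "[int a = int p ^ m] (mod int d)" using i2 i3 i4
    by (metis cong_sym cong_trans mult_1 power_one)
  hence "int d dvd int a - int (p ^ m)" by (simp add: cong_iff_dvd_diff)
  hence "int d dvd \<bar>int a - int (p ^ m)\<bar>" by simp
  hence "d dvd e" unfolding e_def
    by (metis abs_ge_zero int_dvd_int_iff nat_0_le)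
  hence "d dvd j * e" by simp
  hence cc: "[k ^ (j * e) = 1] (mod p)" unfolding d_def using ord_divides by blast
  have kp: "k ^ (j * e) \<ge> 1" using k by simp
  have dv: "p dvd k ^ (j * e) - 1" using cc kp cong_to_1_nat by blast
  then obtain q where q: "k ^ (j * e) - 1 = p * q" by blast
  have gt: "k ^ (j * e) > 1" proof -
    have "j * e > 0" using epos j by simp
    thus ?thesis using k one_less_power by blast
  qed
  hence qpos: "q > 0" using q by (cases q) auto
  have "real k ^ (j * e) - 1 = real (k ^ (j * e) - 1)" using kp by (simp add: of_nat_diff)
  also have "\<dots> = real p * real q" using q by simp
  finally have "(real k ^ (j * e) - 1) / real p = real q" using p1 by simp
  thus ?thesis unfolding pos_nat_def e_def[symmetric] using qpos by simp
qed

theorem mainTheorem4: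
  fixes n1 n2 n3 k :: nat
  assumes "prime n1" and "prime n2" and "prime n3"
    and "n1 \<noteq> n2" and "n1 \<noteq> n3" and "n2 \<noteq> n3"
    and "k > 1"
    and "coprime k n1" and "coprime k n2" and "coprime k n3"
    and "pseudoprime (n1 * n2 * n3) k"
  shows "\<forall>m j :: nat. m \<ge> 1 \<longrightarrow> j \<ge> 1 \<longrightarrow>
      pos_nat ((real k ^ (j * nat \<bar>int (n2 * n3) - int (n1 ^ m)\<bar>) - 1) / real n1) \<and>
      pos_nat ((real k ^ (j * nat \<bar>int (n1 * n2) - int (n3 ^ m)\<bar>) - 1) / real n3) \<and>
      pos_nat ((real k ^ (j * nat \<bar>int (n1 * n3) - int (n2 ^ m)\<bar>) - 1) / real n2)"
proof (intro allI impI)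
  fix m j :: nat
  assume m: "m \<ge> 1" and j: "j \<ge> 1"
  have c: "[k ^ (n1 * n2 * n3 - 1) = 1] (mod n1 * n2 * n3)"
    using assms(11) unfolding pseudoprime_def by blast
  have c1: "[k ^ (n1 * (n2 * n3) - 1) = 1] (mod n1)"
    using c cong_dvd_modulus_nat by (metis dvd_triv_left mult.assoc)
  have c3: "[k ^ (n3 * (n1 * n2) - 1) = 1] (mod n3)"
    using c cong_dvd_modulus_nat by (metis dvd_triv_right mult.commute)
  have c2: "[k ^ (n2 * (n1 * n3) - 1) = 1] (mod n2)"
    using c cong_dvd_modulus_nat by (metis dvd_triv_left mult.assoc mult.commute)
  have nd1: "\<not> n1 dvd n2 * n3" using assms
    by (metis prime_dvd_mult_iff primes_dvd_imp_eq)
  have nd3: "\<not> n3 dvd n1 * n2" using assms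
    by (metis prime_dvd_mult_iff primes_dvd_imp_eq)
  have nd2: "\<not> n2 dvd n1 * n3" using assms
    by (metis prime_dvd_mult_iff primes_dvd_imp_eq)
  show "pos_nat ((real k ^ (j * nat \<bar>int (n2 * n3) - int (n1 ^ m)\<bar>) - 1) / real n1) \<and>
      pos_nat ((real k ^ (j * nat \<bar>int (n1 * n2) - int (n3 ^ m)\<bar>) - 1) / real n3) \<and>
      pos_nat ((real k ^ (j * nat \<bar>int (n1 * n3) - int (n2 ^ m)\<bar>) - 1) / real n2)"
    using key[OF assms(1) assms(8) c1 nd1 m j assms(7)]
      key[OF assms(3) assms(10) c3 nd3 m j assms(7)]
      key[OF assms(2) assms(9) c2 nd2 m j assms(7)] by blast
qed

end
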